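(* Let $p$ be a prime and $m$ a positive integer with $m+2\le p$. Let $B$ be a finite left brace with $(B,+)\cong \mathbb{Z}/(p^{\alpha_1})\times\cdots\times\mathbb{Z}/(p^{\alpha_m})$ for integers $1\le\alpha_1\le\cdots\le\alpha_m$. For $i\ge 0$ let $\Omega_i(B,+)=\{x\in B: p^ix=0\}$. Then for every $i\ge1$ and every $a\in\Omega_{i+1}(B,+)\setminus\Omega_i(B,+)$, the $p$-th power $a^p$ of $a$ in $(B,\cdot)$ satisfies $a^p\in\Omega_i(B,+)\setminus\Omega_{i-1}(B,+)$.
   Context: A left brace is a set $B$ with two binary operations $+$ and $\cdot$ such that $(B,+)$ is an abelian group, $(B,\cdot)$ is a group, and $a\cdot(b+c)+a=a\cdot b+a\cdot c$ for all $a,b,c\in B$. $a^p$ denotes $a\cdot a\cdots a$ ($p$ factors) in $(B,\cdot)$. *)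

theory Defs
  imports "HOL-Algebra.Algebra"
begin

text \<open>A left brace: two group structures A (additive, written multiplicatively in
HOL-Algebra, abelian) and M (multiplicative) on the same carrier, with
a(b+c)+a = ab+ac.\<close>

definition left_brace :: "('a, 'b) monoid_scheme \<Rightarrow> ('a, 'c) monoid_scheme \<Rightarrow> bool" where
  "left_brace A M \<longleftrightarrow> comm_group A \<and> group M \<and> carrier M = carrier A \<and>
     (\<forall>a\<in>carrier A. \<forall>b\<in>carrier A. \<forall>c\<in>carrier A.
        (a \<otimes>\<^bsub>M\<^esub> (b \<otimes>\<^bsub>A\<^esub> c)) \<otimes>\<^bsub>A\<^esub> a
          = (a \<otimes>\<^bsub>M\<^esub> b) \<otimes>\<^bsub>A\<^esub> (a \<otimes>\<^bsub>M\<^esub> c))"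

definition Omega :: "('a, 'b) monoid_scheme \<Rightarrow> nat \<Rightarrow> nat \<Rightarrow> 'a set" where
  "Omega A p i = {x \<in> carrier A. x [^]\<^bsub>A\<^esub> (p ^ i) = \<one>\<^bsub>A\<^esub>}"

end

theory Submission
  imports Defs
begin


definition sg :: "('a,'b) monoid_scheme \<Rightarrow> ('a \<Rightarrow> 'a) \<Rightarrow> 'a \<Rightarrow> 'a" where
  "sg G f x = f x \<otimes>\<^bsub>G\<^esub> inv\<^bsub>G\<^esub> x"

primrec SS :: "('a,'b) monoid_scheme \<Rightarrow> ('a \<Rightarrow> 'a) \<Rightarrow> nat \<Rightarrow> 'a \<Rightarrow> 'a" where
  "SS G f 0 x = \<one>\<^bsub>G\<^esub>"
| "SS G f (Suc n) x = SS G f n x \<otimes>\<^bsub>G\<^esub> (f^^n) x"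

definition WW :: "('a,'b) monoid_scheme \<Rightarrow> nat \<Rightarrow> ('a \<Rightarrow> 'a) \<Rightarrow> nat \<Rightarrow> 'a set" where
  "WW G p g k = (g^^k) ` {x \<in> carrier G. x [^]\<^bsub>G\<^esub> p = \<one>\<^bsub>G\<^esub>}"

context comm_group begin

lemma funpow_hom: "f \<in> hom G G \<Longrightarrow> (f^^n) \<in> hom G G"
proof (induction n)
  case 0 then show ?case by (simp add: hom_def)
next
  case (Suc n) then show ?case using Group.hom_compose[of "f^^n" G G f G] by (simp add: comp_def)
qed

lemma sg_hom: "f \<in> hom G G \<Longrightarrow> sg G f \<in> hom G G"
  unfolding hom_def sg_def
  by (auto simp: hom_in_carrier hom_mult inv_mult m_ac Pi_iff)

lemma sg_closed: "f \<in> hom G G \<Longrightarrow> x \<in> carrier G \<Longrightarrow> sg G f x \<in> carrier G"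
  by (simp add: sg_def hom_in_carrier)

lemma sg_mult: "f \<in> hom G G \<Longrightarrow> x \<in> carrier G \<Longrightarrow> sg G f x \<otimes> x = f x"
  by (simp add: sg_def hom_in_carrier m_assoc)

lemma SS_closed: "f \<in> hom G G \<Longrightarrow> x \<in> carrier G \<Longrightarrow> SS G f n x \<in> carrier G"
  by (induction n) (auto intro: hom_in_carrier funpow_hom)

lemma funpow_closed: "f \<in> hom G G \<Longrightarrow> x \<in> carrier G \<Longrightarrow> (f^^n) x \<in> carrier G"
  by (rule hom_in_carrier[OF funpow_hom])

lemma funpow_SS: assumes f: "f \<in> hom G G" and x: "x \<in> carrier G"
  shows "(f^^n) x = x \<otimes> sg G f (SS G f n x)"
proof (induction n)
  case 0 then show ?case
    using sg_hom[OF f] by (simp add: x hom_one)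
next
  case (Suc n)
  have "(f^^Suc n) x = f ((f^^n) x)" by simp
  also have "\<dots> = sg G f ((f^^n) x) \<otimes> (f^^n) x" using sg_mult[OF f funpow_closed[OF f x]] by simp
  also have "\<dots> = sg G f ((f^^n) x) \<otimes> (x \<otimes> sg G f (SS G f n x))" using Suc by simp
  also have "\<dots> = x \<otimes> (sg G f (SS G f n x) \<otimes> sg G f ((f^^n) x))"
    using sg_closed[OF f] funpow_closed[OF f x] SS_closed[OF f x] x by (simp add: m_ac)
  also have "\<dots> = x \<otimes> sg G f (SS G f (Suc n) x)"
    using hom_mult[OF sg_hom[OF f]] funpow_closed[OF f x] SS_closed[OF f x] by simp
  finally show ?case .
qed

lemma SS_Suc': assumes f: "f \<in> hom G G" and x: "x \<in> carrier G"
  shows "SS G f (Suc n) x = x \<otimes> f (SS G f n x)"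
proof (induction n)
  case 0 then show ?case by (simp add: x hom_one[OF f is_group is_group])
next
  case (Suc n)
  have "SS G f (Suc (Suc n)) x = SS G f (Suc n) x \<otimes> f ((f^^n) x)" by simp
  also have "\<dots> = x \<otimes> (f (SS G f n x) \<otimes> f ((f^^n) x))"
    using Suc x f by (simp add: m_assoc SS_closed funpow_closed hom_in_carrier)
  also have "\<dots> = x \<otimes> f (SS G f (Suc n) x)"
    using hom_mult[OF f] funpow_closed[OF f x] SS_closed[OF f x] by simp
  finally show ?case .
qed

lemma hom_finprod: assumes h: "h \<in> hom G G" and t: "t \<in> {..(n::nat)} \<rightarrow> carrier G"
  shows "h (finprod G t {..n}) = finprod G (\<lambda>j. h (t j)) {..n}"
  using t
proof (induction n)
  case 0 then show ?case using h by (simp add: Pi_iff hom_in_carrier)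
next
  case (Suc n)
  have t': "t \<in> {..n} \<rightarrow> carrier G" using Suc.prems by auto
  have ht: "(\<lambda>j. h (t j)) \<in> {..Suc n} \<rightarrow> carrier G" using Suc.prems h by (auto simp: Pi_iff hom_in_carrier)
  show ?case using Suc.IH[OF t'] Suc.prems ht h t'
    by (simp add: hom_mult Pi_iff)
qed

lemma SS_formula: assumes f: "f \<in> hom G G" and x: "x \<in> carrier G"
  shows "SS G f n x = finprod G (\<lambda>j. ((sg G f)^^j) x [^] (n choose Suc j)) {..n}"
proof (induction n)
  case 0 then show ?case using x by simp
next
  case (Suc n)
  define g where "g = sg G f"
  have g: "g \<in> hom G G" using sg_hom[OF f] g_def by simp
  have gc: "\<And>j. (g^^j) x \<in> carrier G" using funpow_closed[OF g x] .
  define U where "U = finprod G (\<lambda>i. (g^^Suc i) x [^] (n choose Suc i)) {..n}"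
  have IH: "SS G f n x = finprod G (\<lambda>j. (g^^j) x [^] (n choose Suc j)) {..n}" using Suc g_def by simp
  have "SS G f (Suc n) x = x \<otimes> (g (SS G f n x) \<otimes> SS G f n x)"
    using SS_Suc'[OF f x] sg_mult[OF f SS_closed[OF f x]] g_def by simp
  also have "g (SS G f n x) = U"
    unfolding IH U_def
    by (subst hom_finprod[OF g]) (auto simp: gc hom_nat_pow[OF g _ is_group is_group] Pi_iff)
  finally have L: "SS G f (Suc n) x = x \<otimes> (U \<otimes> SS G f n x)" .
  have "finprod G (\<lambda>j. (g^^j) x [^] (Suc n choose Suc j)) {..Suc n}
      = finprod G (\<lambda>j. (g^^j) x [^] (n choose j) \<otimes> (g^^j) x [^] (n choose Suc j)) {..Suc n}"
    by (intro finprod_cong') (auto simp: gc nat_pow_mult)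
  also have "\<dots> = finprod G (\<lambda>j. (g^^j) x [^] (n choose j)) {..Suc n} \<otimes> finprod G (\<lambda>j. (g^^j) x [^] (n choose Suc j)) {..Suc n}"
    by (rule finprod_multf) (auto simp: gc)
  also have "finprod G (\<lambda>j. (g^^j) x [^] (n choose j)) {..Suc n} = U \<otimes> x"
    unfolding U_def by (subst finprod_Suc2) (auto simp: gc x)
  also have "finprod G (\<lambda>j. (g^^j) x [^] (n choose Suc j)) {..Suc n} = SS G f n x"
    unfolding IH by (subst finprod_Suc) (auto simp: gc binomial_eq_0 intro!: finprod_closed)
  finally have R: "finprod G (\<lambda>j. (g^^j) x [^] (Suc n choose Suc j)) {..Suc n} = U \<otimes> x \<otimes> SS G f n x" .
  have Uc: "U \<in> carrier G" proof -
    have gc': "\<And>j. g ((g^^j) x) \<in> carrier G" using gc hom_in_carrier[OF g] by blast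
    show ?thesis unfolding U_def by (auto intro!: finprod_closed simp: gc')
  qed
  show ?case using L R Uc x SS_closed[OF f x] g_def by (simp add: m_ac)
qed

lemma subgroup_pow_closed: "subgroup H G \<Longrightarrow> y \<in> H \<Longrightarrow> y [^] (n::nat) \<in> H"
  by (induction n) (auto intro: subgroup.m_closed subgroup.one_closed)

lemma subgroup_finprod: assumes "subgroup H G" "\<And>j. j \<le> (n::nat) \<Longrightarrow> t j \<in> H"
  shows "finprod G t {..n} \<in> H"
  using assms(2)
proof (induction n)
  case 0
  have "t 0 \<in> carrier G" using 0 subgroup.subset[OF assms(1)] by auto
  then show ?case using 0 by simp
next
  case (Suc n)
  have t: "t \<in> {..Suc n} \<rightarrow> carrier G" using Suc.prems subgroup.subset[OF assms(1)] by auto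
  show ?case using Suc t by (simp add: subgroup.m_closed[OF assms(1)])
qed

lemma invariant_funpow: assumes g: "g \<in> hom G G" and inv: "\<forall>h\<in>H. g h \<in> H" and y: "y \<in> H"
  shows "(g^^n) y \<in> H"
  by (induction n) (use inv y in auto)

lemma SS_p_mod:
  assumes f: "f \<in> hom G G" and x: "x \<in> carrier G" and p: "Factorial_Ring.prime p" and p3: "3 \<le> p"
    and H: "subgroup H G" and inv: "\<forall>h\<in>H. sg G f h \<in> H" and xp: "sg G f (x [^] p) \<in> H"
  shows "SS G f p x \<otimes> inv (x [^] p \<otimes> ((sg G f)^^(p-1)) x) \<in> H"
proof -
  define g where "g = sg G f"
  have g: "g \<in> hom G G" using sg_hom[OF f] g_def by simp
  have gc: "\<And>j. (g^^j) x \<in> carrier G" using funpow_closed[OF g x] .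
  obtain s where ps: "p = Suc (Suc (Suc s))" using p3 by (intro that[of "p - 3"]) simp
  define T where "T j = (g^^j) x [^] (p choose Suc j)" for j
  have Tc: "T \<in> A \<rightarrow> carrier G" for A using gc by (auto simp: T_def)
  define Mi where "Mi = finprod G (\<lambda>i. T (Suc i)) {..s}"
  have MH: "Mi \<in> H" unfolding Mi_def
  proof (rule subgroup_finprod[OF H])
    fix i assume i: "i \<le> s"
    have "p dvd (p choose Suc (Suc i))" by (rule dvd_choose_prime) (use i ps p in auto)
    then obtain c where c: "p choose Suc (Suc i) = p * c" by blast
    have "T (Suc i) = ((g^^Suc i) x [^] p) [^] c" unfolding T_def c by (rule nat_pow_pow[symmetric]) (rule gc)
    also have "(g^^Suc i) x [^] p = (g^^i) (g (x [^] p))"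
      using hom_nat_pow[OF funpow_hom[OF g] x is_group is_group, of "Suc i" p] by (simp add: funpow_swap1)
    finally show "T (Suc i) \<in> H"
      using invariant_funpow[OF g, of H] inv xp g_def subgroup_pow_closed[OF H] by auto
  qed
  have Mc: "Mi \<in> carrier G" using MH subgroup.subset[OF H] by auto
  have "SS G f p x = finprod G T {..p}" using SS_formula[OF f x] g_def T_def by (simp add: T_def[abs_def])
  also have "\<dots> = T p \<otimes> (T (Suc (Suc s)) \<otimes> (Mi \<otimes> T 0))"
  proof -
    have "finprod G T {..Suc (Suc (Suc s))} = T (Suc (Suc (Suc s))) \<otimes> finprod G T {..Suc (Suc s)}"
      using Tc by (rule finprod_Suc)
    also have "finprod G T {..Suc (Suc s)} = T (Suc (Suc s)) \<otimes> finprod G T {..Suc s}"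
      using Tc by (rule finprod_Suc)
    also have "finprod G T {..Suc s} = Mi \<otimes> T 0"
      unfolding Mi_def using Tc by (rule finprod_Suc2)
    finally show ?thesis unfolding ps .
  qed
  also have "T p = \<one>" by (simp add: T_def gc binomial_eq_0)
  also have "T (Suc (Suc s)) = (g^^(p-1)) x" using gc[of "Suc (Suc s)"] by (simp add: T_def ps)
  also have "T 0 = x [^] p" by (simp add: T_def)
  finally have "SS G f p x = Mi \<otimes> (x [^] p \<otimes> (g^^(p-1)) x)"
    using gc x Mc by (simp add: m_ac)
  then have "SS G f p x \<otimes> inv (x [^] p \<otimes> (g^^(p-1)) x) = Mi"
    using gc x Mc by (simp add: m_assoc)
  then show ?thesis using MH g_def by simp
qed

lemma key_p: assumes f: "f \<in> hom G G" and p: "Factorial_Ring.prime p" and p3: "3 \<le> p"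
    and x: "x \<in> carrier G" and xp: "x [^] p = \<one>"
  shows "(f^^p) x = x \<otimes> ((sg G f)^^p) x"
proof -
  define g where "g = sg G f"
  have g: "g \<in> hom G G" using sg_hom[OF f] g_def by simp
  have g1: "g \<one> = \<one>" using hom_one[OF g is_group is_group] .
  have "SS G f p x \<otimes> inv (x [^] p \<otimes> ((sg G f)^^(p-1)) x) \<in> {\<one>}"
    by (rule SS_p_mod[OF f x p p3 triv_subgroup]) (use g1 g_def xp in auto)
  then have "SS G f p x \<otimes> inv ((g^^(p-1)) x) = \<one>" using xp g_def funpow_closed[OF g x] by simp
  then have E: "SS G f p x = (g^^(p-1)) x"
    using funpow_closed[OF g x] SS_closed[OF f x] inv_solve_right'[of \<one> "SS G f p x" "(g^^(p-1)) x"] by simp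
  have "(f^^p) x = x \<otimes> g (SS G f p x)" using funpow_SS[OF f x] g_def by simp
  also have "\<dots> = x \<otimes> (g^^p) x" 
  proof -
    have "p = Suc (p - 1)" using p3 by simp
    then have "(g^^p) x = g ((g^^(p-1)) x)" by (metis funpow.simps(2) o_apply)
    then show ?thesis unfolding E by simp
  qed
  finally show ?thesis using g_def by simp
qed

lemma pow_pres: assumes h: "h \<in> hom G G" and x: "x \<in> carrier G" and xp: "x [^] (k::nat) = \<one>"
  shows "h x [^] k = \<one>"
  using hom_nat_pow[OF h x is_group is_group, of k] xp hom_one[OF h is_group is_group] by simp

lemma iterate_agree: assumes "\<forall>x\<in>E. \<phi> x = \<psi> x" "\<forall>x\<in>E. \<phi> x \<in> E" "x \<in> E"
  shows "(\<phi>^^k) x = (\<psi>^^k) x"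
proof -
  have "(\<phi>^^k) x = (\<psi>^^k) x \<and> (\<phi>^^k) x \<in> E" by (induction k) (use assms in auto)
  then show ?thesis by simp
qed

lemma nilp: assumes f: "f \<in> hom G G" and p: "Factorial_Ring.prime p" and p3: "3 \<le> p"
  and fid: "\<forall>x\<in>carrier G. (f^^(p^N)) x = x"
  and x: "x \<in> carrier G" and xp: "x [^] p = \<one>"
  shows "((sg G f)^^(p^N)) x = \<one>"
proof -
  define g where "g = sg G f"
  have g: "g \<in> hom G G" using sg_hom[OF f] g_def by simp
  define E where "E = {x \<in> carrier G. x [^] p = \<one>}"
  have C: "\<forall>x\<in>E. (g^^(p^K)) x = sg G (f^^(p^K)) x" for K
  proof (induction K)
    case 0 then show ?case by (simp add: g_def)
  next
    case (Suc K)
    define h where "h = f^^(p^K)"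
    have h: "h \<in> hom G G" using funpow_hom[OF f] h_def by simp
    show ?case
    proof
      fix y assume y: "y \<in> E"
      have yc: "y \<in> carrier G" and yp: "y [^] p = \<one>" using y E_def by auto
      have pres: "\<forall>z\<in>E. (g^^(p^K)) z \<in> E"
        using pow_pres[OF funpow_hom[OF g]] funpow_closed[OF g] E_def by auto
      have "(g^^(p^Suc K)) y = ((g^^(p^K))^^p) y" by (simp add: funpow_mult mult.commute)
      also have "\<dots> = ((sg G h)^^p) y"
        by (rule iterate_agree[of E]) (use Suc pres y h_def in auto)
      also have "\<dots> = (h^^p) y \<otimes> inv y"
      proof -
        have k: "(h^^p) y = y \<otimes> ((sg G h)^^p) y" by (rule key_p[OF h p p3 yc yp])
        have c: "((sg G h)^^p) y \<in> carrier G" using funpow_closed[OF sg_hom[OF h] yc] .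
        show ?thesis unfolding k using c yc by (simp add: m_comm[of y] m_assoc)
      qed
      also have "(h^^p) y = (f^^(p^Suc K)) y" by (simp add: h_def funpow_mult mult.commute)
      finally show "(g^^(p^Suc K)) y = sg G (f^^(p^Suc K)) y" by (simp add: sg_def)
    qed
  qed
  have "x \<in> E" using x xp E_def by auto
  then have "(g^^(p^N)) x = sg G (f^^(p^N)) x" using C by blast
  also have "\<dots> = \<one>" using fid x by (simp add: sg_def)
  finally show ?thesis using g_def by simp
qed

lemma Om_subgroup: "subgroup {x \<in> carrier G. x [^] (p::nat) = \<one>} G"
  by (auto simp: subgroup_def nat_pow_distrib nat_pow_inv)

lemma W_subgroup: assumes g: "g \<in> hom G G" shows "subgroup (WW G p g k) G"
proof -
  have "group_hom G G (g^^k)" using funpow_hom[OF g] by (simp add: group_hom_def group_hom_axioms_def is_group)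
  then show ?thesis unfolding WW_def by (rule group_hom.subgroup_img_is_subgroup[OF _ Om_subgroup])
qed

lemma W_Suc: "WW G p g (Suc k) = g ` WW G p g k"
  unfolding WW_def by (simp add: image_comp)

lemma W_one: assumes g: "g \<in> hom G G" shows "\<one> \<in> WW G p g k"
  using subgroup.one_closed[OF W_subgroup[OF g]] by simp

lemma W_sub: assumes g: "g \<in> hom G G" shows "WW G p g (Suc k) \<subseteq> WW G p g k"
proof -
  have "g ` {x \<in> carrier G. x [^] p = \<one>} \<subseteq> {x \<in> carrier G. x [^] p = \<one>}"
    using pow_pres[OF g] hom_in_carrier[OF g] by auto
  then have "(g^^k) ` (g ` {x \<in> carrier G. x [^] p = \<one>}) \<subseteq> WW G p g k" unfolding WW_def by blast
  then show ?thesis unfolding WW_def by (simp add: funpow_Suc_right image_comp del: funpow.simps)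
qed

lemma W_anti: assumes g: "g \<in> hom G G" and kl: "k \<le> l" shows "WW G p g l \<subseteq> WW G p g k"
  using kl
proof (induction l)
  case 0 then show ?case by simp
next
  case (Suc l)
  then show ?case using W_sub[OF g, of p l] by (cases "k = Suc l") auto
qed

lemma W_stable: assumes "WW G p g (Suc k) = WW G p g k" shows "WW G p g (k + j) = WW G p g k"
proof (induction j)
  case 0 then show ?case by simp
next
  case (Suc j)
  have "WW G p g (k + Suc j) = g ` WW G p g (k + j)" using W_Suc by simp
  also have "\<dots> = g ` WW G p g k" using Suc by simp
  also have "\<dots> = WW G p g k" using assms W_Suc by simp
  finally show ?case .
qed

lemma W_final:
  assumes g: "g \<in> hom G G" and fin: "finite (carrier G)" and cardG: "card (carrier G) = p ^ n"
    and p: "Factorial_Ring.prime p"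
    and cardO: "card {x \<in> carrier G. x [^] p = \<one>} \<le> p ^ m"
    and nil: "\<forall>x\<in>carrier G. x [^] p = \<one> \<longrightarrow> (g^^K) x = \<one>"
  shows "WW G p g m = {\<one>}"
proof -
  have WK: "WW G p g K = {\<one>}" using nil W_one[OF g] unfolding WW_def by auto
  have triv: "WW G p g k = {\<one>}" if "WW G p g (Suc k) = WW G p g k" for k
  proof -
    have "WW G p g k = WW G p g (k + K)" using W_stable[OF that] by simp
    also have "\<dots> \<subseteq> WW G p g K" by (rule W_anti[OF g]) simp
    finally show ?thesis using WK W_one[OF g, of p k] by auto
  qed
  have finW: "finite (WW G p g k)" for k
    using subgroup.subset[OF W_subgroup[OF g]] fin finite_subset by blast
  have pw: "\<exists>e. card (WW G p g k) = p ^ e" for k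
  proof -
    have "card (WW G p g k) dvd p ^ n"
      using lagrange[OF W_subgroup[OF g, of p k]] cardG unfolding order_def by (metis dvd_triv_right)
    then show ?thesis using divides_primepow_nat[OF p] by blast
  qed
  have claim: "WW G p g k = {\<one>} \<or> card (WW G p g k) * p ^ k \<le> p ^ m" for k
  proof (induction k)
    case 0 then show ?case using cardO by (simp add: WW_def)
  next
    case (Suc k)
    show ?case
    proof (cases "WW G p g (Suc k) = WW G p g k")
      case True then show ?thesis using triv by simp
    next
      case neq: False
      show ?thesis
      proof (cases "WW G p g k = {\<one>}")
        case True then show ?thesis using W_sub[OF g, of p k] W_one[OF g, of p "Suc k"] by auto
      next
        case False
        then have IH: "card (WW G p g k) * p ^ k \<le> p ^ m" using Suc by simp
        have lt: "card (WW G p g (Suc k)) < card (WW G p g k)"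
          using W_sub[OF g, of p k] neq finW by (simp add: psubset_card_mono psubsetI)
        obtain a b where a: "card (WW G p g (Suc k)) = p ^ a" and b: "card (WW G p g k) = p ^ b"
          using pw by blast
        have p1: "1 < p" using p prime_gt_1_nat by blast
        have "a < b" using lt a b p1 power_less_imp_less_exp by fastforce
        then have "p ^ a * p \<le> p ^ b" using power_increasing[of "Suc a" b p] p1 by (simp add: mult.commute)
        then have "card (WW G p g (Suc k)) * p \<le> card (WW G p g k)" using a b by simp
        then have "card (WW G p g (Suc k)) * p * p ^ k \<le> card (WW G p g k) * p ^ k"
          by (rule mult_right_mono) simp
        then have "card (WW G p g (Suc k)) * p * p ^ k \<le> p ^ m" using IH by linarith
        moreover have "card (WW G p g (Suc k)) * p ^ Suc k = card (WW G p g (Suc k)) * p * p ^ k"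
          by (simp only: power_Suc mult.assoc)
        ultimately have "card (WW G p g (Suc k)) * p ^ Suc k \<le> p ^ m" by simp
        then show ?thesis by simp
      qed
    qed
  qed
  show ?thesis
  proof (cases "WW G p g m = {\<one>}")
    case True then show ?thesis .
  next
    case False
    then have "card (WW G p g m) * p ^ m \<le> p ^ m" using claim by blast
    moreover have "0 < p ^ m" using p prime_gt_0_nat by simp
    ultimately have "card (WW G p g m) \<le> 1" by (metis mult_le_cancel2 mult_1 not_less)
    then show ?thesis using W_one[OF g, of p m] finW[of m]
      using card_le_Suc0_iff_eq[OF finW[of m]] by auto
  qed
qed

end


definition lam :: "('a,'b) monoid_scheme \<Rightarrow> ('a,'c) monoid_scheme \<Rightarrow> 'a \<Rightarrow> 'a \<Rightarrow> 'a" where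
  "lam A M b x = (b \<otimes>\<^bsub>M\<^esub> x) \<otimes>\<^bsub>A\<^esub> inv\<^bsub>A\<^esub> b"

lemma lb_A: "left_brace A M \<Longrightarrow> comm_group A" by (simp add: left_brace_def)
lemma lb_M: "left_brace A M \<Longrightarrow> group M" by (simp add: left_brace_def)
lemma lb_car: "left_brace A M \<Longrightarrow> carrier M = carrier A" by (simp add: left_brace_def)
lemma lb_ax: "left_brace A M \<Longrightarrow> a \<in> carrier A \<Longrightarrow> b \<in> carrier A \<Longrightarrow> c \<in> carrier A \<Longrightarrow>
   (a \<otimes>\<^bsub>M\<^esub> (b \<otimes>\<^bsub>A\<^esub> c)) \<otimes>\<^bsub>A\<^esub> a = (a \<otimes>\<^bsub>M\<^esub> b) \<otimes>\<^bsub>A\<^esub> (a \<otimes>\<^bsub>M\<^esub> c)"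
  by (simp add: left_brace_def)

lemma lb_closed: assumes lb: "left_brace A M" and ab: "a \<in> carrier A" "b \<in> carrier A"
  shows "a \<otimes>\<^bsub>M\<^esub> b \<in> carrier A"
proof -
  interpret M: group M by (rule lb_M[OF lb])
  show ?thesis using ab lb_car[OF lb] M.m_closed by simp
qed

lemma lb_zero: assumes lb: "left_brace A M" and x: "x \<in> carrier A"
  shows "x \<otimes>\<^bsub>M\<^esub> \<one>\<^bsub>A\<^esub> = x"
proof -
  interpret A: comm_group A by (rule lb_A[OF lb])
  have u: "x \<otimes>\<^bsub>M\<^esub> \<one>\<^bsub>A\<^esub> \<in> carrier A" using lb_closed[OF lb x] by simp
  have "(x \<otimes>\<^bsub>M\<^esub> \<one>\<^bsub>A\<^esub>) \<otimes>\<^bsub>A\<^esub> x = (x \<otimes>\<^bsub>M\<^esub> \<one>\<^bsub>A\<^esub>) \<otimes>\<^bsub>A\<^esub> (x \<otimes>\<^bsub>M\<^esub> \<one>\<^bsub>A\<^esub>)"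
    using lb_ax[OF lb x, of "\<one>\<^bsub>A\<^esub>" "\<one>\<^bsub>A\<^esub>"] by simp
  then have "x = x \<otimes>\<^bsub>M\<^esub> \<one>\<^bsub>A\<^esub>" by (rule A.l_cancel[OF _ x u u])
  then show ?thesis by simp
qed

lemma lb_one: assumes lb: "left_brace A M" shows "\<one>\<^bsub>M\<^esub> = \<one>\<^bsub>A\<^esub>"
proof -
  interpret A: comm_group A by (rule lb_A[OF lb])
  interpret M: group M by (rule lb_M[OF lb])
  have o: "\<one>\<^bsub>M\<^esub> \<in> carrier A" using lb_car[OF lb] by auto
  have "\<one>\<^bsub>M\<^esub> \<otimes>\<^bsub>M\<^esub> \<one>\<^bsub>A\<^esub> = \<one>\<^bsub>A\<^esub>" using lb_car[OF lb] by simp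
  then show ?thesis using lb_zero[OF lb o] by simp
qed

lemma lam_hom: assumes lb: "left_brace A M" and b: "b \<in> carrier A"
  shows "lam A M b \<in> hom A A"
proof -
  interpret A: comm_group A by (rule lb_A[OF lb])
  have "lam A M b (x \<otimes>\<^bsub>A\<^esub> y) = lam A M b x \<otimes>\<^bsub>A\<^esub> lam A M b y"
    if x: "x \<in> carrier A" and y: "y \<in> carrier A" for x y
  proof -
    have c1: "b \<otimes>\<^bsub>M\<^esub> (x \<otimes>\<^bsub>A\<^esub> y) \<in> carrier A" using lb_closed[OF lb b] x y by simp
    have c2: "b \<otimes>\<^bsub>M\<^esub> x \<in> carrier A" "b \<otimes>\<^bsub>M\<^esub> y \<in> carrier A" using lb_closed[OF lb b] x y by auto
    have "b \<otimes>\<^bsub>M\<^esub> (x \<otimes>\<^bsub>A\<^esub> y) = ((b \<otimes>\<^bsub>M\<^esub> x) \<otimes>\<^bsub>A\<^esub> (b \<otimes>\<^bsub>M\<^esub> y)) \<otimes>\<^bsub>A\<^esub> inv\<^bsub>A\<^esub> b"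
      using A.inv_solve_right[OF c1 _ b] c2 lb_ax[OF lb b x y] by simp
    then show ?thesis unfolding lam_def using c2 b by (simp add: A.m_ac A.inv_mult)
  qed
  moreover have "lam A M b x \<in> carrier A" if "x \<in> carrier A" for x
    unfolding lam_def using lb_closed[OF lb b that] b by simp
  ultimately show ?thesis unfolding hom_def by auto
qed

lemma lam_closed: assumes "left_brace A M" "b \<in> carrier A" "x \<in> carrier A" shows "lam A M b x \<in> carrier A"
  by (rule hom_in_carrier[OF lam_hom[OF assms(1,2)] assms(3)])

lemma (in comm_group) cg_aux: assumes "u \<in> carrier G" "v \<in> carrier G" "b \<in> carrier G"
  shows "(u \<otimes> inv b) \<otimes> inv (v \<otimes> inv b) = u \<otimes> inv v"
proof -
  have e: "inv (v \<otimes> inv b) = inv v \<otimes> b" using assms by (simp add: inv_mult)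
  have "(u \<otimes> inv b) \<otimes> (inv v \<otimes> b) = u \<otimes> (inv b \<otimes> (inv v \<otimes> b))" using assms by (simp add: m_assoc)
  also have "inv b \<otimes> (inv v \<otimes> b) = inv v \<otimes> (inv b \<otimes> b)" using assms by (intro m_lcomm) auto
  finally show ?thesis using assms e by simp
qed

lemma lam_mult: assumes lb: "left_brace A M" and b: "b \<in> carrier A" and c: "c \<in> carrier A" and x: "x \<in> carrier A"
  shows "lam A M (b \<otimes>\<^bsub>M\<^esub> c) x = lam A M b (lam A M c x)"
proof -
  interpret A: comm_group A by (rule lb_A[OF lb])
  interpret M: group M by (rule lb_M[OF lb])
  have h: "group_hom A A (lam A M b)" using lam_hom[OF lb b]
    by (simp add: group_hom_def group_hom_axioms_def A.is_group)
  have cx: "c \<otimes>\<^bsub>M\<^esub> x \<in> carrier A" using lb_closed[OF lb c x] .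
  have bc: "b \<otimes>\<^bsub>M\<^esub> c \<in> carrier A" using lb_closed[OF lb b c] .
  have bcx: "b \<otimes>\<^bsub>M\<^esub> (c \<otimes>\<^bsub>M\<^esub> x) \<in> carrier A" using lb_closed[OF lb b cx] .
  have ic: "inv\<^bsub>A\<^esub> c \<in> carrier A" using c by simp
  have "lam A M b (lam A M c x) = lam A M b (c \<otimes>\<^bsub>M\<^esub> x) \<otimes>\<^bsub>A\<^esub> lam A M b (inv\<^bsub>A\<^esub> c)"
    unfolding lam_def[of A M c x] by (rule hom_mult[OF lam_hom[OF lb b] cx ic])
  also have "lam A M b (inv\<^bsub>A\<^esub> c) = inv\<^bsub>A\<^esub> (lam A M b c)" by (rule group_hom.hom_inv[OF h c])
  also have "lam A M b (c \<otimes>\<^bsub>M\<^esub> x) \<otimes>\<^bsub>A\<^esub> inv\<^bsub>A\<^esub> (lam A M b c) = (b \<otimes>\<^bsub>M\<^esub> (c \<otimes>\<^bsub>M\<^esub> x)) \<otimes>\<^bsub>A\<^esub> inv\<^bsub>A\<^esub> (b \<otimes>\<^bsub>M\<^esub> c)"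
    unfolding lam_def by (rule comm_group.cg_aux[OF lb_A[OF lb] bcx bc b])
  also have "b \<otimes>\<^bsub>M\<^esub> (c \<otimes>\<^bsub>M\<^esub> x) = (b \<otimes>\<^bsub>M\<^esub> c) \<otimes>\<^bsub>M\<^esub> x"
    using M.m_assoc lb_car[OF lb] b c x by simp
  finally show ?thesis unfolding lam_def by simp
qed

lemma lam_one: assumes lb: "left_brace A M" and x: "x \<in> carrier A"
  shows "lam A M \<one>\<^bsub>M\<^esub> x = x"
proof -
  interpret A: comm_group A by (rule lb_A[OF lb])
  interpret M: group M by (rule lb_M[OF lb])
  have "\<one>\<^bsub>M\<^esub> \<otimes>\<^bsub>M\<^esub> x = x" using x lb_car[OF lb] by simp
  then show ?thesis unfolding lam_def using x lb_one[OF lb] by simp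
qed

lemma lam_decomp: assumes lb: "left_brace A M" and b: "b \<in> carrier A" and x: "x \<in> carrier A"
  shows "b \<otimes>\<^bsub>M\<^esub> x = b \<otimes>\<^bsub>A\<^esub> lam A M b x"
proof -
  interpret A: comm_group A by (rule lb_A[OF lb])
  have y: "b \<otimes>\<^bsub>M\<^esub> x \<in> carrier A" using lb_closed[OF lb b x] .
  have "b \<otimes>\<^bsub>A\<^esub> ((b \<otimes>\<^bsub>M\<^esub> x) \<otimes>\<^bsub>A\<^esub> inv\<^bsub>A\<^esub> b) = (b \<otimes>\<^bsub>M\<^esub> x) \<otimes>\<^bsub>A\<^esub> (b \<otimes>\<^bsub>A\<^esub> inv\<^bsub>A\<^esub> b)"
    using y b by (intro A.m_lcomm) auto
  also have "\<dots> = b \<otimes>\<^bsub>M\<^esub> x" using y b by simp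
  finally show ?thesis unfolding lam_def by simp
qed

lemma lam_pow: assumes lb: "left_brace A M" and a: "a \<in> carrier A"
  shows "\<forall>x\<in>carrier A. (lam A M a ^^ n) x = lam A M (a [^]\<^bsub>M\<^esub> n) x"
proof (induction n)
  case 0 then show ?case using lam_one[OF lb] by simp
next
  case (Suc n)
  interpret M: group M by (rule lb_M[OF lb])
  have an: "a [^]\<^bsub>M\<^esub> n \<in> carrier A" using lb_car[OF lb] a M.nat_pow_closed by metis
  show ?case
  proof
    fix x assume x: "x \<in> carrier A"
    have "(lam A M a ^^ Suc n) x = (lam A M a ^^ n) (lam A M a x)" by (simp add: funpow_swap1)
    also have "\<dots> = lam A M (a [^]\<^bsub>M\<^esub> n) (lam A M a x)" using Suc lam_closed[OF lb a x] by simp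
    also have "\<dots> = lam A M (a [^]\<^bsub>M\<^esub> n \<otimes>\<^bsub>M\<^esub> a) x" using lam_mult[OF lb an a x] by simp
    finally show "(lam A M a ^^ Suc n) x = lam A M (a [^]\<^bsub>M\<^esub> Suc n) x" by simp
  qed
qed

lemma pow_SS: assumes lb: "left_brace A M" and a: "a \<in> carrier A"
  shows "a [^]\<^bsub>M\<^esub> n = SS A (lam A M a) n a"
proof (induction n)
  case 0 then show ?case using lb_one[OF lb] by simp
next
  case (Suc n)
  interpret M: group M by (rule lb_M[OF lb])
  have an: "a [^]\<^bsub>M\<^esub> n \<in> carrier A" using lb_car[OF lb] a M.nat_pow_closed by metis
  have "a [^]\<^bsub>M\<^esub> Suc n = a [^]\<^bsub>M\<^esub> n \<otimes>\<^bsub>M\<^esub> a" by simp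
  also have "\<dots> = a [^]\<^bsub>M\<^esub> n \<otimes>\<^bsub>A\<^esub> lam A M (a [^]\<^bsub>M\<^esub> n) a" by (rule lam_decomp[OF lb an a])
  also have "lam A M (a [^]\<^bsub>M\<^esub> n) a = (lam A M a ^^ n) a" using lam_pow[OF lb a] a by simp
  finally show ?case using Suc by simp
qed



lemma pow_product_group:
  assumes "f \<in> carrier (product_group I G)"
  shows "f [^]\<^bsub>product_group I G\<^esub> (n::nat) = (\<lambda>k\<in>I. f k [^]\<^bsub>G k\<^esub> n)"
proof (induction n)
  case 0 then show ?case by simp
next
  case (Suc n) then show ?case using assms by (auto simp: PiE_def)
qed

lemma card_PG:
  fixes m :: nat
  assumes p: "p > 0"
  shows "card (carrier (product_group {1..m} (\<lambda>k. integer_mod_group (p ^ \<alpha> k)))) = p ^ (\<Sum>k\<in>{1..m}. \<alpha> k)"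
proof -
  have "card (carrier (product_group {1..m} (\<lambda>k. integer_mod_group (p ^ \<alpha> k)))) = (\<Prod>k\<in>{1..m}. p ^ \<alpha> k)"
  proof -
    have "\<And>k. card (carrier (integer_mod_group (p ^ \<alpha> k))) = p ^ \<alpha> k"
      using p by (simp add: carrier_integer_mod_group del: of_nat_power)
    then show ?thesis unfolding carrier_product_group by (subst card_PiE) simp_all
  qed
  then show ?thesis by (simp add: power_sum)
qed

lemma card_PG_Omega:
  fixes p :: nat
  assumes p: "p > 0" and al: "\<forall>k\<in>{1..m}. 1 \<le> \<alpha> k"
  defines "P \<equiv> product_group {1..m} (\<lambda>k. integer_mod_group (p ^ \<alpha> k))"
  shows "card {f \<in> carrier P. f [^]\<^bsub>P\<^esub> p = \<one>\<^bsub>P\<^esub>} \<le> p ^ m"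
proof -
  define S where "S = {f \<in> carrier P. f [^]\<^bsub>P\<^esub> p = \<one>\<^bsub>P\<^esub>}"
  define c where "c k = int (p ^ (\<alpha> k - 1))" for k
  have pc: "int p * c k = int (p ^ \<alpha> k)" if "k \<in> {1..m}" for k
  proof -
    have "\<alpha> k = Suc (\<alpha> k - 1)" using al that by fastforce
    then have "p ^ \<alpha> k = p * p ^ (\<alpha> k - 1)" by (metis power_Suc)
    then show ?thesis by (simp add: c_def)
  qed
  have cpos: "c k > 0" for k using p by (simp add: c_def)
  define \<psi> where "\<psi> f = (\<lambda>k\<in>{1..m}. f k div c k)" for f :: "nat \<Rightarrow> int"
  have key: "f k = c k * (f k div c k) \<and> 0 \<le> f k div c k \<and> f k div c k < int p"
    if f: "f \<in> S" and k: "k \<in> {1..m}" for f k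
  proof -
    have fc: "f \<in> carrier P" and fp: "f [^]\<^bsub>P\<^esub> p = \<one>\<^bsub>P\<^esub>" using f S_def by auto
    have rng: "0 \<le> f k" "f k < int (p ^ \<alpha> k)"
      using fc k p unfolding P_def by (auto simp: carrier_integer_mod_group PiE_iff)
    have "(f [^]\<^bsub>P\<^esub> p) k = \<one>\<^bsub>P\<^esub> k" using fp by simp
    then have "(int p * f k) mod int (p ^ \<alpha> k) = 0"
      using pow_product_group[OF fc[unfolded P_def]] k unfolding P_def by simp
    then have "int p * c k dvd int p * f k" using pc[OF k] by (simp add: mod_eq_0_iff_dvd)
    then have d: "c k dvd f k" using p by simp
    then have e: "f k = c k * (f k div c k)" by simp
    have "c k * (f k div c k) < c k * int p" using e rng(2) pc[OF k] by (simp add: mult.commute)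
    then have "f k div c k < int p" using cpos[of k] by simp
    moreover have "0 \<le> f k div c k" using rng(1) cpos[of k] by (simp add: pos_imp_zdiv_nonneg_iff)
    ultimately show ?thesis using e by simp
  qed
  have inj: "inj_on \<psi> S"
  proof
    fix f g assume f: "f \<in> S" and g: "g \<in> S" and eq: "\<psi> f = \<psi> g"
    show "f = g"
    proof
      fix k show "f k = g k"
      proof (cases "k \<in> {1..m}")
        case True
        have "\<psi> f k = \<psi> g k" using eq by simp
        then have "f k div c k = g k div c k" using True unfolding \<psi>_def by simp
        then show ?thesis using conjunct1[OF key[OF f True]] conjunct1[OF key[OF g True]] by simp
      next
        case False
        then show ?thesis using f g unfolding S_def P_def by (auto simp: PiE_def extensional_def)
      qed
    qed
  qed
  have img: "\<psi> ` S \<subseteq> (\<Pi>\<^sub>E k\<in>{1..m}. {0..<int p})"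
    using key unfolding \<psi>_def by auto
  have "card S \<le> card (\<Pi>\<^sub>E k\<in>{1..m}. {0..<int p})"
    by (rule card_inj_on_le[OF inj img]) (simp add: finite_PiE)
  also have "\<dots> = p ^ m" by (simp add: card_PiE)
  finally show ?thesis unfolding S_def .
qed

lemma (in comm_group) SS_pow: assumes f: "f \<in> hom G G" and x: "x \<in> carrier G"
  shows "(SS G f n x) [^] (k::nat) = SS G f n (x [^] k)"
proof (induction n)
  case 0 then show ?case by simp
next
  case (Suc n)
  have "(SS G f (Suc n) x) [^] k = (SS G f n x) [^] k \<otimes> ((f^^n) x) [^] k"
    using SS_closed[OF f x] funpow_closed[OF f x] by (simp add: nat_pow_distrib)
  also have "((f^^n) x) [^] k = (f^^n) (x [^] k)"
    using hom_nat_pow[OF funpow_hom[OF f] x is_group is_group] by simp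
  finally show ?case using Suc by simp
qed

theorem mainTheorem6:
  fixes A :: "('a, 'b) monoid_scheme" and M :: "('a, 'c) monoid_scheme"
    and p m :: nat and \<alpha> :: "nat \<Rightarrow> nat"
  assumes "Factorial_Ring.prime p" and "m \<ge> 1" and "m + 2 \<le> p"
    and "left_brace A M" and "finite (carrier A)"
    and "\<forall>k\<in>{1..m}. 1 \<le> \<alpha> k"
    and "\<forall>k\<in>{1..m}. \<forall>l\<in>{1..m}. k \<le> l \<longrightarrow> \<alpha> k \<le> \<alpha> l"
    and "A \<cong> product_group {1..m} (\<lambda>k. integer_mod_group (p ^ \<alpha> k))"
  shows "\<forall>i \<ge> 1. \<forall>a \<in> Omega A p (i + 1) - Omega A p i.
           a [^]\<^bsub>M\<^esub> p \<in> Omega A p i - Omega A p (i - 1)"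
proof -
  note p = assms(1) and lb = assms(4) and fin = assms(5) and al = assms(6)
  interpret A: comm_group A by (rule lb_A[OF lb])
  interpret M: group M by (rule lb_M[OF lb])
  define P where "P = product_group {1..m} (\<lambda>k. integer_mod_group (p ^ \<alpha> k))"
  obtain \<phi> where phi: "\<phi> \<in> iso A P" using assms(8) unfolding is_iso_def P_def by blast
  have p0: "p > 0" using p prime_gt_0_nat by blast
  have p3: "3 \<le> p" using assms(2,3) by simp
  have grpP: "group P" unfolding P_def by (rule product_group) simp
  define n where "n = (\<Sum>k\<in>{1..m}. \<alpha> k)"
  have cardA: "card (carrier A) = p ^ n"
  proof -
    have "card (carrier P) = p ^ n" unfolding P_def n_def by (rule card_PG[OF p0])
    then show ?thesis using iso_same_card[OF assms(8)] P_def by simp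
  qed
  define Om where "Om = {x \<in> carrier A. x [^]\<^bsub>A\<^esub> p = \<one>\<^bsub>A\<^esub>}"
  have cardO: "card Om \<le> p ^ m"
  proof -
    have hom: "\<phi> \<in> hom A P" and bij: "bij_betw \<phi> (carrier A) (carrier P)" using phi by (auto simp: iso_def)
    have inj: "inj_on \<phi> Om" using bij_betw_imp_inj_on[OF bij] Om_def by (auto intro: inj_on_subset)
    have img: "\<phi> ` Om \<subseteq> {f \<in> carrier P. f [^]\<^bsub>P\<^esub> p = \<one>\<^bsub>P\<^esub>}"
    proof
      fix y assume "y \<in> \<phi> ` Om"
      then obtain x where x: "x \<in> carrier A" "x [^]\<^bsub>A\<^esub> p = \<one>\<^bsub>A\<^esub>" and y: "y = \<phi> x" using Om_def by auto
      have "\<phi> x [^]\<^bsub>P\<^esub> p = \<phi> (x [^]\<^bsub>A\<^esub> p)" using hom_nat_pow[OF hom x(1) A.is_group grpP] by simp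
      also have "\<dots> = \<one>\<^bsub>P\<^esub>" using x(2) hom_one[OF hom A.is_group grpP] by simp
      finally show "y \<in> {f \<in> carrier P. f [^]\<^bsub>P\<^esub> p = \<one>\<^bsub>P\<^esub>}" using y hom_in_carrier[OF hom x(1)] by simp
    qed
    have finP: "finite (carrier P)" using iso_finite[OF assms(8)] fin P_def by simp
    have "card Om \<le> card {f \<in> carrier P. f [^]\<^bsub>P\<^esub> p = \<one>\<^bsub>P\<^esub>}"
      by (rule card_inj_on_le[OF inj img]) (use finP in simp)
    also have "\<dots> \<le> p ^ m" unfolding P_def by (rule card_PG_Omega[OF p0 al])
    finally show ?thesis .
  qed
  show ?thesis
  proof (intro allI impI ballI)
    fix i a assume i: "1 \<le> i" and a: "a \<in> Omega A p (i + 1) - Omega A p i"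
    have ac: "a \<in> carrier A" and a1: "a [^]\<^bsub>A\<^esub> (p ^ (i+1)) = \<one>\<^bsub>A\<^esub>"
      and a2: "a [^]\<^bsub>A\<^esub> (p ^ i) \<noteq> \<one>\<^bsub>A\<^esub>" using a by (auto simp: Omega_def)
    define f where "f = lam A M a"
    have f: "f \<in> hom A A" using lam_hom[OF lb ac] f_def by simp
    define g where "g = sg A f"
    have g: "g \<in> hom A A" using A.sg_hom[OF f] g_def by simp
    have fid: "\<forall>x\<in>carrier A. (f^^(p^n)) x = x"
    proof
      fix x assume x: "x \<in> carrier A"
      have "a [^]\<^bsub>M\<^esub> (p ^ n) = \<one>\<^bsub>M\<^esub>"
        using M.pow_order_eq_1[of a] ac lb_car[OF lb] cardA unfolding order_def by simp
      then show "(f^^(p^n)) x = x" using lam_pow[OF lb ac] x lam_one[OF lb x] f_def by simp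
    qed
    have nil: "\<forall>x\<in>carrier A. x [^]\<^bsub>A\<^esub> p = \<one>\<^bsub>A\<^esub> \<longrightarrow> (g^^(p^n)) x = \<one>\<^bsub>A\<^esub>"
      using A.nilp[OF f p p3 fid] g_def by blast
    have Wm: "WW A p g m = {\<one>\<^bsub>A\<^esub>}"
      by (rule A.W_final[OF g fin cardA p _ nil]) (use cardO Om_def in simp)
    define y where "y = a [^]\<^bsub>A\<^esub> (p ^ i)"
    have yc: "y \<in> carrier A" using ac y_def by simp
    have yp: "y [^]\<^bsub>A\<^esub> p = \<one>\<^bsub>A\<^esub>" using a1 ac unfolding y_def by (simp add: A.nat_pow_pow mult.commute)
    have y1: "y \<noteq> \<one>\<^bsub>A\<^esub>" using a2 y_def by simp
    define b where "b = a [^]\<^bsub>M\<^esub> p"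
    have bS: "b = SS A f p a" using pow_SS[OF lb ac] b_def f_def by simp
    have bc: "b \<in> carrier A" using bS A.SS_closed[OF f ac] by simp
    have gWm: "\<forall>x\<in>Om. (g^^k) x = \<one>\<^bsub>A\<^esub>" if "m \<le> k" for k
      using A.W_anti[OF g that, of p] Wm unfolding WW_def Om_def by blast
    have part1: "b [^]\<^bsub>A\<^esub> (p ^ i) = \<one>\<^bsub>A\<^esub>"
    proof -
      have "b [^]\<^bsub>A\<^esub> (p ^ i) = SS A f p y" using bS A.SS_pow[OF f ac] y_def by simp
      moreover have "SS A f p y \<otimes>\<^bsub>A\<^esub> inv\<^bsub>A\<^esub> (y [^]\<^bsub>A\<^esub> p \<otimes>\<^bsub>A\<^esub> ((sg A f)^^(p-1)) y) \<in> {\<one>\<^bsub>A\<^esub>}"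
        by (rule A.SS_p_mod[OF f yc p p3 A.triv_subgroup])
           (use yp hom_one[OF A.sg_hom[OF f] A.is_group A.is_group] in auto)
      moreover have "((sg A f)^^(p-1)) y = \<one>\<^bsub>A\<^esub>"
        using gWm[of "p-1"] assms(3) yc yp g_def Om_def by auto
      ultimately show ?thesis using yp A.SS_closed[OF f yc] by simp
    qed
    define z where "z = a [^]\<^bsub>A\<^esub> (p ^ (i - 1))"
    have zc: "z \<in> carrier A" using ac z_def by simp
    have zp: "z [^]\<^bsub>A\<^esub> p = y"
    proof -
      have "p ^ (i - 1) * p = p ^ i" using i by (metis Suc_diff_1 less_le_trans power_Suc2 zero_less_one)
      then show ?thesis using ac unfolding z_def y_def by (simp add: A.nat_pow_pow)
    qed
    have yW0: "y \<in> WW A p g 0" using yc yp unfolding WW_def by simp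
    obtain d where d: "d < m" "y \<in> WW A p g d" "y \<notin> WW A p g (Suc d)"
    proof -
      have "\<exists>d<m. y \<in> WW A p g d \<and> y \<notin> WW A p g (Suc d)"
      proof (rule ccontr)
        assume "\<not> ?thesis"
        then have st: "\<forall>d<m. y \<in> WW A p g d \<longrightarrow> y \<in> WW A p g (Suc d)" by blast
        have "k \<le> m \<longrightarrow> y \<in> WW A p g k" for k
          by (induction k) (use yW0 st in auto)
        then show False using Wm y1 by auto
      qed
      then show ?thesis using that by blast
    qed
    obtain u where u: "u \<in> carrier A" "u [^]\<^bsub>A\<^esub> p = \<one>\<^bsub>A\<^esub>" and yu: "y = (g^^d) u"
      using d(2) unfolding WW_def by auto
    have gmd: "(g^^(m-d)) y = \<one>\<^bsub>A\<^esub>"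
    proof -
      have "(g^^(m-d)) y = (g^^(m-d+d)) u" unfolding yu funpow_add by simp
      also have "m - d + d = m" using d(1) by simp
      finally show ?thesis using gWm[of m] u Om_def by simp
    qed
    define w where "w = (g^^(m-d)) z"
    have wc: "w \<in> carrier A" using A.funpow_closed[OF g zc] w_def by simp
    have wp: "w [^]\<^bsub>A\<^esub> p = \<one>\<^bsub>A\<^esub>"
      using hom_nat_pow[OF A.funpow_hom[OF g] zc A.is_group A.is_group, of "m-d" p] zp gmd w_def by simp
    define H where "H = WW A p g (Suc d)"
    have H: "subgroup H A" unfolding H_def by (rule A.W_subgroup[OF g])
    have gpz: "(g^^(p-1)) z \<in> H"
    proof -
      have "(g^^(p-1)) z = (g^^(p-1-(m-d))) w"
      proof -
        have "p - 1 = (p-1-(m-d)) + (m-d)" using assms(3) d(1) by simp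
        then show ?thesis unfolding w_def by (metis comp_apply funpow_add)
      qed
      also have "\<dots> \<in> WW A p g (p-1-(m-d))" unfolding WW_def using wc wp by simp
      also have "WW A p g (p-1-(m-d)) \<subseteq> H" unfolding H_def
        by (rule A.W_anti[OF g]) (use assms(3) d(1) in simp)
      finally show ?thesis .
    qed
    have Hinv: "\<forall>h\<in>H. sg A f h \<in> H"
    proof
      fix h assume "h \<in> H"
      then have "g h \<in> WW A p g (Suc (Suc d))" unfolding H_def using A.W_Suc by blast
      then show "sg A f h \<in> H" using A.W_sub[OF g, of p "Suc d"] H_def g_def by auto
    qed
    have zpH: "sg A f (z [^]\<^bsub>A\<^esub> p) \<in> H" using zp d(2) A.W_Suc[of p g d] H_def g_def by auto
    have mod: "SS A f p z \<otimes>\<^bsub>A\<^esub> inv\<^bsub>A\<^esub> (z [^]\<^bsub>A\<^esub> p \<otimes>\<^bsub>A\<^esub> ((sg A f)^^(p-1)) z) \<in> H"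
      by (rule A.SS_p_mod[OF f zc p p3 H Hinv zpH])
    have part2: "b [^]\<^bsub>A\<^esub> (p ^ (i - 1)) \<noteq> \<one>\<^bsub>A\<^esub>"
    proof
      assume "b [^]\<^bsub>A\<^esub> (p ^ (i - 1)) = \<one>\<^bsub>A\<^esub>"
      then have S1: "SS A f p z = \<one>\<^bsub>A\<^esub>" using bS A.SS_pow[OF f ac] z_def by simp
      define v where "v = (g^^(p-1)) z"
      have vc: "v \<in> carrier A" using A.funpow_closed[OF g zc] v_def by simp
      have "inv\<^bsub>A\<^esub> (y \<otimes>\<^bsub>A\<^esub> v) \<in> H" using mod S1 zp v_def g_def yc vc by simp
      then have "y \<otimes>\<^bsub>A\<^esub> v \<in> H" using subgroup.m_inv_closed[OF H] yc vc by fastforce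
      then have "(y \<otimes>\<^bsub>A\<^esub> v) \<otimes>\<^bsub>A\<^esub> inv\<^bsub>A\<^esub> v \<in> H"
        using subgroup.m_closed[OF H] subgroup.m_inv_closed[OF H] gpz v_def by blast
      then have "y \<in> H" using yc vc by (simp add: A.m_assoc)
      then show False using d(3) H_def by simp
    qed
    show "a [^]\<^bsub>M\<^esub> p \<in> Omega A p i - Omega A p (i - 1)"
      using part1 part2 bc b_def by (simp add: Omega_def)
  qed
qed


end
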